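(* Let $F$ be a field of characteristic zero and $n$ a natural number. There is no nonzero element $l\in W(n,0)$ such that every basis element $b\in\{e^{a_1x_1}\cdots e^{a_nx_n}x_1^{b_1}\cdots x_n^{b_n}\partial_i: a_j,b_j\in\mathbb Z,1\le i\le n\}$ is an eigenvector of $\mathrm{ad}\,l$ (i.e. $[b,l]\in Fb$ for all such $b$).
   Context: $W(n,0)$ is the Lie algebra with basis $e^{\alpha}x^{\beta}\partial_i$ ($\alpha,\beta\in\mathbb Z^n$, $1\le i\le n$), realized as vector fields $f\partial_i$ with $f$ in the commutative algebra with basis $e^{\alpha}x^{\beta}$ (multiplication adding exponents), $\partial_i(e^{\alpha}x^{\beta})=a_ie^{\alpha}x^{\beta}+b_ie^{\alpha}x^{\beta-\epsilon_i}$, and bracket $[f\partial_i,g\partial_j]=f\partial_i(g)\partial_j-g\partial_j(f)\partial_i$. *)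

theory Defs
  imports Main
begin

text \<open>Basis element e^alpha x^beta d_i of W(n,0) is indexed by (alpha, beta, i),
 where alpha, beta :: nat => int are exponent vectors (components j < n relevant,
 components j >= n required to be 0) and i < n (0-based index of d_{i+1}).\<close>

type_synonym widx = "(nat \<Rightarrow> int) \<times> (nat \<Rightarrow> int) \<times> nat"

definition wbasis :: "nat \<Rightarrow> widx set" where
  "wbasis n = {(a, b, i). i < n \<and> (\<forall>j\<ge>n. a j = 0 \<and> b j = 0)}"

definition wsupp :: "(widx \<Rightarrow> 'a::zero) \<Rightarrow> widx set" where
  "wsupp l = {k. l k \<noteq> 0}"

definition W :: "nat \<Rightarrow> (widx \<Rightarrow> 'a::field) set" where
  "W n = {l. finite (wsupp l) \<and> wsupp l \<subseteq> wbasis n}"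

definition wsingle :: "widx \<Rightarrow> 'a::zero \<Rightarrow> widx \<Rightarrow> 'a" where
  "wsingle k c = (\<lambda>k'. if k' = k then c else 0)"

definition unitv :: "nat \<Rightarrow> nat \<Rightarrow> int" where
  "unitv i = (\<lambda>j. if j = i then 1 else 0)"

text \<open>Bracket of basis elements:
 [e^a x^b d_i, e^c x^d d_j] = (e^a x^b) d_i(e^c x^d) d_j - (e^c x^d) d_j(e^a x^b) d_i, with
 d_i(e^c x^d) = c_i e^c x^d + d_i e^c x^(d - eps_i).\<close>
fun wbr :: "widx \<Rightarrow> widx \<Rightarrow> widx \<Rightarrow> 'a::field" where
  "wbr (a, b, i) (c, d, j) =
     (\<lambda>k. wsingle ((\<lambda>t. a t + c t), (\<lambda>t. b t + d t), j) (of_int (c i)) k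
        + wsingle ((\<lambda>t. a t + c t), (\<lambda>t. b t + d t - unitv i t), j) (of_int (d i)) k
        - wsingle ((\<lambda>t. a t + c t), (\<lambda>t. b t + d t), i) (of_int (a j)) k
        - wsingle ((\<lambda>t. a t + c t), (\<lambda>t. b t + d t - unitv j t), i) (of_int (b j)) k)"

definition wbracket :: "(widx \<Rightarrow> 'a::field) \<Rightarrow> (widx \<Rightarrow> 'a) \<Rightarrow> widx \<Rightarrow> 'a" where
  "wbracket l m = (\<lambda>k. \<Sum>p\<in>wsupp l. \<Sum>q\<in>wsupp m. l p * m q * wbr p q k)"

end

theory Submission
  imports Defs
begin

abbreviation zv :: "nat \<Rightarrow> int" where "zv \<equiv> (\<lambda>_. 0)"

lemma supp_single: "wsupp (wsingle b (1::'a::field)) = {b}"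
  by (auto simp: wsupp_def wsingle_def)

lemma wbracket_single:
  "wbracket (wsingle b (1::'a::field)) l k = (\<Sum>q\<in>wsupp l. l q * wbr b q k)"
  unfolding wbracket_def supp_single by (simp add: wsingle_def)

lemma sum_one:
  fixes l :: "widx \<Rightarrow> 'a::field"
  assumes "finite (wsupp l)" and "\<And>q. q \<noteq> q0 \<Longrightarrow> l q = 0 \<or> g q = 0"
  shows "(\<Sum>q\<in>wsupp l. l q * g q) = l q0 * g q0"
proof -
  have "(\<Sum>q\<in>wsupp l. l q * g q) = (\<Sum>q\<in>insert q0 (wsupp l). l q * g q)"
  proof (cases "q0 \<in> wsupp l")
    case True then show ?thesis by (simp add: insert_absorb)
  next
    case False then show ?thesis using assms(1) by (simp add: wsupp_def)
  qed
  also have "\<dots> = l q0 * g q0 + (\<Sum>q\<in>wsupp l - {q0}. l q * g q)"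
    using assms(1) by (simp add: sum.insert_remove)
  also have "(\<Sum>q\<in>wsupp l - {q0}. l q * g q) = 0"
    using assms(2) by (intro sum.neutral) auto
  finally show ?thesis by simp
qed

lemma sum_two:
  fixes l :: "widx \<Rightarrow> 'a::field"
  assumes "finite (wsupp l)" and "q0 \<noteq> q1" and "\<And>q. q \<noteq> q0 \<Longrightarrow> q \<noteq> q1 \<Longrightarrow> l q = 0 \<or> g q = 0"
  shows "(\<Sum>q\<in>wsupp l. l q * g q) = l q0 * g q0 + l q1 * g q1"
proof -
  have "(\<Sum>q\<in>wsupp l. l q * g q) = (\<Sum>q\<in>insert q0 (insert q1 (wsupp l)). l q * g q)"
  proof (rule sum.mono_neutral_left)
    show "\<forall>i\<in>insert q0 (insert q1 (wsupp l)) - wsupp l. l i * g i = 0"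
      by (auto simp: wsupp_def)
  qed (use assms(1) in auto)
  also have "\<dots> = (\<Sum>q\<in>{q0,q1}. l q * g q)"
  proof (rule sum.mono_neutral_right)
    show "\<forall>i\<in>insert q0 (insert q1 (wsupp l)) - {q0,q1}. l i * g i = 0"
      using assms(3) by auto
  qed (use assms(1) in auto)
  finally show ?thesis using assms(2) by simp
qed

lemma minus_unitv_eq: "((\<lambda>t. b t - unitv i t) = d) = (b = (\<lambda>t. d t + unitv i t))"
proof
  assume "(\<lambda>t. b t - unitv i t) = d"
  then have h: "\<And>t. b t - unitv i t = d t" by (simp add: fun_eq_iff)
  show "b = (\<lambda>t. d t + unitv i t)"
  proof
    fix t show "b t = d t + unitv i t" using h[of t] by linarith
  qed
next
  assume "b = (\<lambda>t. d t + unitv i t)"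
  then show "(\<lambda>t. b t - unitv i t) = d" by (auto simp: fun_eq_iff)
qed

lemma compA:
  fixes l :: "widx \<Rightarrow> 'a::field"
  assumes fin: "finite (wsupp l)"
  shows "wbracket (wsingle ((\<lambda>_. 0),(\<lambda>_. 0),i) 1) l (c,d,j)
     = l (c,d,j) * of_int (c i) + l (c, (\<lambda>t. d t + unitv i t), j) * of_int (d i + 1)"
proof -
  have ne: "(c,d,j) \<noteq> (c, (\<lambda>t. d t + unitv i t), j)"
    by (auto simp: fun_eq_iff unitv_def)
  show ?thesis
    unfolding wbracket_single
    apply (subst sum_two[OF fin ne])
    subgoal for q
      by (cases q) (auto simp: wsingle_def minus_unitv_eq)
    apply (auto simp: wsingle_def fun_eq_iff unitv_def)
    done
qed


lemma eig_zero:
  fixes l :: "widx \<Rightarrow> 'a::field"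
  assumes H: "\<forall>b\<in>wbasis n. \<exists>C::'a. wbracket (wsingle b 1) l = (\<lambda>k. C * wsingle b 1 k)"
    and b: "b \<in> wbasis n" and k: "k \<noteq> b"
  shows "wbracket (wsingle b 1) l k = 0"
proof -
  from H b obtain C :: 'a where "wbracket (wsingle b 1) l = (\<lambda>k. C * wsingle b 1 k)" by blast
  then show ?thesis using k by (simp add: wsingle_def)
qed

lemma c_zero:
  fixes l :: "widx \<Rightarrow> 'a::field_char_0"
  assumes fin: "finite (wsupp l)" and supp: "wsupp l \<subseteq> wbasis n"
    and H: "\<forall>b\<in>wbasis n. \<exists>C::'a. wbracket (wsingle b 1) l = (\<lambda>k. C * wsingle b 1 k)"
    and lq: "l (c,d,j) \<noteq> 0"
  shows "c = (\<lambda>_. 0)"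
proof (rule ccontr)
  assume "c \<noteq> (\<lambda>_. 0)"
  then obtain t where ct: "c t \<noteq> 0" by auto
  have "(c,d,j) \<in> wbasis n" using lq supp by (auto simp: wsupp_def)
  then have tn: "t < n" using ct by (auto simp: wbasis_def) (meson not_le)
  have b0: "((\<lambda>_. 0),(\<lambda>_. 0),t) \<in> wbasis n" using tn by (simp add: wbasis_def)
  have A: "l (c,e,j) * of_int (c t) + l (c, (\<lambda>s. e s + unitv t s), j) * of_int (e t + 1) = 0" for e
  proof -
    have "(c,e,j) \<noteq> ((\<lambda>_. 0),(\<lambda>_. 0),t)" using ct by auto
    from eig_zero[OF H b0 this] compA[OF fin, of t c e j] show ?thesis by simp
  qed
  define f where "f m = (c, (\<lambda>s. d s + int m * unitv t s), j)" for m
  have nz: "l (f m) \<noteq> 0" for m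
  proof (induction m)
    case 0 then show ?case using lq by (simp add: f_def)
  next
    case (Suc m)
    have e: "f (Suc m) = (c, (\<lambda>s. (d s + int m * unitv t s) + unitv t s), j)"
      by (simp add: f_def algebra_simps)
    have "of_int (c t) \<noteq> (0::'a)" using ct by simp
    then show ?case using A[of "\<lambda>s. d s + int m * unitv t s"] Suc e
      by (auto simp: f_def)
  qed
  have "inj f"
  proof
    fix x y assume "f x = f y"
    then have "(\<lambda>s. d s + int x * unitv t s) = (\<lambda>s. d s + int y * unitv t s)"
      by (simp add: f_def)
    from fun_cong[OF this, of t] show "x = y" by (simp add: unitv_def)
  qed
  moreover have "range f \<subseteq> wsupp l" using nz by (auto simp: wsupp_def)
  ultimately have "infinite (wsupp l)"
    using infinite_iff_countable_subset by blast
  then show False using fin by simp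
qed


lemma e_shape:
  fixes l :: "widx \<Rightarrow> 'a::field_char_0"
  assumes fin: "finite (wsupp l)" and supp: "wsupp l \<subseteq> wbasis n"
    and H: "\<forall>b\<in>wbasis n. \<exists>C::'a. wbracket (wsingle b 1) l = (\<lambda>k. C * wsingle b 1 k)"
    and lq: "l (zv,e,j) \<noteq> 0" and i: "i < n" and ei: "e i \<noteq> 0"
  shows "e = unitv i \<and> j = i"
proof -
  define e' where "e' = (\<lambda>s. e s - unitv i s)"
  have ee: "(\<lambda>s. e' s + unitv i s) = e" by (simp add: e'_def)
  have ei': "e' i + 1 = e i" by (simp add: e'_def unitv_def)
  have b0: "(zv,zv,i) \<in> wbasis n" using i by (simp add: wbasis_def)
  have C: "wbracket (wsingle (zv,zv,i) 1) l (zv,e',j) = l (zv,e,j) * of_int (e i)"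
    using compA[OF fin, of i "\<lambda>_. 0" e' j] ee ei' by simp
  have "(zv,e',j) = (zv,zv,i)"
  proof (rule ccontr)
    assume "(zv,e',j) \<noteq> (zv,zv,i)"
    from eig_zero[OF H b0 this] C have "l (zv,e,j) * of_int (e i) = 0" by simp
    then show False using lq ei by simp
  qed
  then have "e' = zv" "j = i" by auto
  then show ?thesis using ee by (auto simp: unitv_def fun_eq_iff)
qed

lemma cls:
  fixes l :: "widx \<Rightarrow> 'a::field_char_0"
  assumes fin: "finite (wsupp l)" and supp: "wsupp l \<subseteq> wbasis n"
    and H: "\<forall>b\<in>wbasis n. \<exists>C::'a. wbracket (wsingle b 1) l = (\<lambda>k. C * wsingle b 1 k)"
    and lq: "l q \<noteq> 0"
  shows "(\<exists>j<n. q = (zv,zv,j)) \<or> (\<exists>m<n. q = (zv,unitv m,m))"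
proof -
  obtain c e j where q: "q = (c,e,j)" by (cases q) auto
  have c: "c = zv" using c_zero[OF fin supp H] lq q by blast
  have qb: "q \<in> wbasis n" using lq supp by (auto simp: wsupp_def)
  then have jn: "j < n" and en: "\<And>s. s \<ge> n \<Longrightarrow> e s = 0" using q by (auto simp: wbasis_def)
  show ?thesis
  proof (cases "e = zv")
    case True then show ?thesis using q c jn by auto
  next
    case False
    then obtain t where et: "e t \<noteq> 0" by auto
    then have tn: "t < n" using en by (meson not_le)
    have "l (zv,e,j) \<noteq> 0" using lq q c by simp
    from e_shape[OF fin supp H this tn et] have "e = unitv t \<and> j = t" .
    then show ?thesis using q c tn by auto
  qed
qed


lemma w1a: "j \<noteq> m \<Longrightarrow> (wbr (zv, unitv m, m) (zv,zv,j) (zv,zv,m) :: 'a::field_char_0) = 0"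
  by (simp add: wsingle_def unitv_def)
lemma w1b: "(wbr (zv, unitv m, m) (zv,unitv m',m') (zv,zv,m) :: 'a::field_char_0) = 0"
  by (auto simp add: wsingle_def unitv_def fun_eq_iff)
lemma w1c: "(wbr (zv, unitv m, m) (zv,zv,m) (zv,zv,m) :: 'a::field_char_0) = -1"
  by (auto simp add: wsingle_def unitv_def fun_eq_iff)
lemma w2a: "(wbr (unitv m, zv, m) (zv,zv,j) (unitv m,unitv m,m) :: 'a::field_char_0) = 0"
  by (auto simp add: wsingle_def unitv_def fun_eq_iff)
lemma w2b: "m' \<noteq> m \<Longrightarrow> (wbr (unitv m, zv, m) (zv,unitv m',m') (unitv m,unitv m,m) :: 'a::field_char_0) = 0"
  by (auto simp add: wsingle_def unitv_def fun_eq_iff)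
lemma w2c: "(wbr (unitv m, zv, m) (zv,unitv m,m) (unitv m,unitv m,m) :: 'a::field_char_0) = -1"
  by (auto simp add: wsingle_def unitv_def fun_eq_iff)


lemma unitv_nz: "unitv m \<noteq> zv"
  by (auto simp: fun_eq_iff unitv_def)

theorem corollary1:
  fixes n :: nat and l :: "widx \<Rightarrow> 'a::field_char_0"
  assumes "l \<in> W n" and "l \<noteq> (\<lambda>_. 0)"
  shows "\<not> (\<forall>b\<in>wbasis n. \<exists>c::'a.
            wbracket (wsingle b 1) l = (\<lambda>k. c * wsingle b 1 k))"
proof
  assume H: "\<forall>b\<in>wbasis n. \<exists>c::'a. wbracket (wsingle b 1) l = (\<lambda>k. c * wsingle b 1 k)"
  have fin: "finite (wsupp l)" and supp: "wsupp l \<subseteq> wbasis n" using assms(1) by (auto simp: W_def)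
  obtain q0 where lq0: "l q0 \<noteq> 0" using assms(2) by (meson ext)
  note cl = cls[OF fin supp H]
  from cl[OF lq0] show False
  proof (elim disjE exE conjE)
    fix m assume mn: "m < n" and q0: "q0 = (zv,zv,m)"
    have b: "(zv, unitv m, m) \<in> wbasis n" using mn by (auto simp: wbasis_def unitv_def)
    have k: "(zv,zv,m) \<noteq> (zv, unitv m, m)" using unitv_nz[of m] by (metis prod.inject)
    have "wbracket (wsingle (zv, unitv m, m) 1) l (zv,zv,m) = 0" by (rule eig_zero[OF H b k])
    moreover have "wbracket (wsingle (zv, unitv m, m) 1) l (zv,zv,m) = l q0 * wbr (zv, unitv m, m) q0 (zv,zv,m)"
      unfolding wbracket_single
    proof (rule sum_one[OF fin])
      fix q assume "q \<noteq> q0"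
      then show "l q = 0 \<or> wbr (zv, unitv m, m) q (zv,zv,m) = (0::'a)"
      proof (cases "l q = 0")
        case False
        from cl[OF False] show ?thesis
        proof (elim disjE exE conjE)
          fix j assume "j < n" "q = (zv,zv,j)"
          then show ?thesis using \<open>q \<noteq> q0\<close> q0 w1a[of j m, where 'a='a] by (simp del: wbr.simps)
        next
          fix m' assume "m' < n" "q = (zv,unitv m',m')"
          then show ?thesis using w1b[of m m', where 'a='a] by (simp del: wbr.simps)
        qed
      qed simp
    qed
    ultimately show False using lq0 q0 w1c[of m, where 'a='a] by (simp del: wbr.simps)
  next
    fix m assume mn: "m < n" and q0: "q0 = (zv,unitv m,m)"
    have b: "(unitv m, zv, m) \<in> wbasis n" using mn by (auto simp: wbasis_def unitv_def)
    have k: "(unitv m, unitv m, m) \<noteq> (unitv m, zv, m)" using unitv_nz[of m] by (metis prod.inject)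
    have "wbracket (wsingle (unitv m, zv, m) 1) l (unitv m, unitv m, m) = 0" by (rule eig_zero[OF H b k])
    moreover have "wbracket (wsingle (unitv m, zv, m) 1) l (unitv m, unitv m, m) = l q0 * wbr (unitv m, zv, m) q0 (unitv m, unitv m, m)"
      unfolding wbracket_single
    proof (rule sum_one[OF fin])
      fix q assume "q \<noteq> q0"
      then show "l q = 0 \<or> wbr (unitv m, zv, m) q (unitv m, unitv m, m) = (0::'a)"
      proof (cases "l q = 0")
        case False
        from cl[OF False] show ?thesis
        proof (elim disjE exE conjE)
          fix j assume "j < n" "q = (zv,zv,j)"
          then show ?thesis using w2a[of m j, where 'a='a] by (simp del: wbr.simps)
        next
          fix m' assume "m' < n" "q = (zv,unitv m',m')"
          moreover then have "m' \<noteq> m" using \<open>q \<noteq> q0\<close> q0 by auto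
          ultimately show ?thesis using w2b[of m' m, where 'a='a] by (simp del: wbr.simps)
        qed
      qed simp
    qed
    ultimately show False using lq0 q0 w2c[of m, where 'a='a] by (simp del: wbr.simps)
  qed
qed

end
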